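(* Let $n\ge3$ and let $M$ be a polytope in $\mathbb{R}^n$ with $rB\subseteq M\subseteq RB$ for some $r,R>0$. Then for any neighboring facets $F\sim F'$ of $M$ and any $f\in H^1(e_{F,F'})$, $$\int_{e_{F,F'}}\{(f')^2-f^2\}\,d\mathcal{H}^1\ge\frac{r^2}{2R^2}\int_{e_{F,F'}}f^2\,d\mathcal{H}^1-\frac{4R^2}{r^2}\,l_{F,F'}\{f(n_F)^2+f(n_{F'})^2\}.$$
   Context: $B$ is the unit ball. Facets $F,F'$ are neighbors if $\dim(F\cap F')=n-2$; $n_F$ is the outer unit normal of $F$; $e_{F,F'}\subset S^{n-1}$ is the shortest geodesic arc from $n_F$ to $n_{F'}$, of length $l_{F,F'}$, parametrized by arclength, $f'$ the arclength derivative, $H^1$ the Sobolev space with one weak $L^2$ derivative on the edge, $\mathcal{H}^1$ arclength measure. *)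

theory Defs
  imports "HOL-Analysis.Analysis"
begin

definition outer_normal :: "'a::euclidean_space set \<Rightarrow> 'a set \<Rightarrow> 'a" where
  "outer_normal M F = (THE u. norm u = 1 \<and>
      (\<exists>h. F \<subseteq> {x. inner u x = h} \<and> M \<subseteq> {x. inner u x \<le> h}))"

definition neighbor_facets :: "'a::euclidean_space set \<Rightarrow> 'a set \<Rightarrow> 'a set \<Rightarrow> bool" where
  "neighbor_facets M F F' \<longleftrightarrow> F facet_of M \<and> F' facet_of M \<and>
      aff_dim (F \<inter> F') = int DIM('a) - 2"

definition arc_len :: "'a::euclidean_space \<Rightarrow> 'a \<Rightarrow> real" where
  "arc_len a b = arccos (inner a b)"

text \<open>Arclength parametrization t \<in> [0, arc_len a b] of the shortest geodesic
  arc from a to b on the unit sphere (a, b unit, b \<noteq> \<plusminus>a).\<close>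
definition arc_param :: "'a::euclidean_space \<Rightarrow> 'a \<Rightarrow> real \<Rightarrow> 'a" where
  "arc_param a b t = (let w = b - inner a b *\<^sub>R a in
      cos t *\<^sub>R a + sin t *\<^sub>R (w /\<^sub>R norm w))"

text \<open>g' is an L^2 weak derivative of g on [0,l], with g its absolutely continuous
  representative: g \<in> H^1(0,l) with derivative g'.\<close>
definition H1_deriv :: "real \<Rightarrow> (real \<Rightarrow> real) \<Rightarrow> (real \<Rightarrow> real) \<Rightarrow> bool" where
  "H1_deriv l g g' \<longleftrightarrow> g' \<in> borel_measurable lborel \<and>
      set_integrable lborel {0..l} g' \<and>
      set_integrable lborel {0..l} (\<lambda>t. (g' t)\<^sup>2) \<and>
      (\<forall>t\<in>{0..l}. g t = g 0 + (LBINT s=0..t. g' s))"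

end

theory Submission
  imports Defs
begin

lemma indef_cont:
  fixes u u' :: "real \<Rightarrow> real"
  assumes "set_integrable lborel {0..l} u'"
    and "\<forall>t\<in>{0..l}. u t = u 0 + (LBINT s=0..t. u' s)"
  shows "continuous_on {0..l} u"
proof -
  have int: "u' integrable_on {0..l}"
    using set_borel_integral_eq_integral(1)[OF assms(1)] .
  have "continuous_on {0..l} (\<lambda>t. u 0 + integral {0..t} u')"
    by (rule continuous_on_add[OF continuous_on_const indefinite_integral_continuous_1[OF int]])
  moreover have "u 0 + integral {0..t} u' = u t" if "t \<in> {0..l}" for t
  proof -
    have "set_integrable lborel {0..t} u'"
      by (rule set_integrable_subset[OF assms(1)]) (use that in auto)
    then have "(LBINT s=ereal 0..ereal t. u' s) = integral {0..t} u'"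
      using that by (intro interval_integral_eq_integral) auto
    then have eq: "(LBINT s=0..t. u' s) = integral {0..t} u'"
      by (metis zero_ereal_def)
    have e: "u t = u 0 + (LBINT s=0..t. u' s)" using assms(2) that by blast
    show ?thesis by (simp only: e eq)
  qed
  ultimately show ?thesis by (rule continuous_on_eq)
qed


lemma set_integrable_mult_cont:
  fixes f h :: "real \<Rightarrow> real"
  assumes "set_integrable lborel {a..b} f" "continuous_on {a..b} h"
  shows "set_integrable lborel {a..b} (\<lambda>t. f t * h t)"
proof -
  have "bounded (h ` {a..b})"
    using compact_imp_bounded[OF compact_continuous_image[OF assms(2) compact_Icc]] .
  then obtain B where "\<forall>y\<in>h ` {a..b}. norm y \<le> B" by (auto simp: bounded_iff)
  then have B: "\<And>t. t \<in> {a..b} \<Longrightarrow> norm (h t) \<le> B" by auto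
  have mf: "set_borel_measurable lborel {a..b} f"
    using assms(1) by (simp add: set_borel_measurable_def set_integrable_def borel_measurable_integrable)
  have mh: "set_borel_measurable lborel {a..b} h"
    unfolding set_borel_measurable_def using borel_measurable_continuous_on_indicator[OF _ assms(2)] by simp
  have "set_borel_measurable lborel {a..b} (\<lambda>t. f t * h t)"
  proof -
    have eq: "(\<lambda>t. indicator {a..b} t *\<^sub>R (f t * h t)) = (\<lambda>t. (indicator {a..b} t *\<^sub>R f t) * (indicator {a..b} t *\<^sub>R h t))"
      by (auto simp: indicator_def fun_eq_iff)
    show ?thesis unfolding set_borel_measurable_def
      by (subst eq) (rule borel_measurable_times[OF mf[unfolded set_borel_measurable_def] mh[unfolded set_borel_measurable_def]])
  qed
  then show ?thesis
  proof (rule set_integrable_bound[rotated])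
    show "set_integrable lborel {a..b} (\<lambda>t. B * f t)" using assms(1) by simp
    show "AE x in lborel. x \<in> {a..b} \<longrightarrow> norm (f x * h x) \<le> norm (B * f x)"
    proof (intro AE_I2 impI)
      fix x assume x: "x \<in> {a..b}"
      have "\<bar>h x\<bar> \<le> \<bar>B\<bar>" using B[OF x] by auto
      then have "\<bar>h x\<bar> * \<bar>f x\<bar> \<le> \<bar>B\<bar> * \<bar>f x\<bar>" by (rule mult_right_mono) auto
      then show "norm (f x * h x) \<le> norm (B * f x)"
        by (simp add: abs_mult mult.commute)
    qed
  qed
qed

lemma fub_core:
  fixes a b :: "real \<Rightarrow> real"
  assumes ia: "integrable lborel (\<lambda>s. indicator {0..l} s * a s)"
    and ib: "integrable lborel (\<lambda>s. indicator {0..l} s * b s)"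
  defines "f \<equiv> (\<lambda>s t. indicator {(s,t). t \<le> s} (s,t) * ((indicator {0..l} s * a s) * (indicator {0..l} t * b t)))"
  shows "(\<integral>t. (\<integral>s. f s t \<partial>lborel) \<partial>lborel) = (\<integral>s. (\<integral>t. f s t \<partial>lborel) \<partial>lborel)"
proof -
  define A where "A = (\<lambda>s. indicator {0..l} s * a s)"
  define B where "B = (\<lambda>s. indicator {0..l} s * b s)"
  have mA[measurable]: "A \<in> borel_measurable lborel" using ia unfolding A_def by auto
  have mB[measurable]: "B \<in> borel_measurable lborel" using ib unfolding B_def by auto
  have iP: "integrable (lborel \<Otimes>\<^sub>M lborel) (\<lambda>(s,t). A s * B t)"
  proof (rule lborel_pair.Fubini_integrable)
    show "(\<lambda>(s,t). A s * B t) \<in> borel_measurable (lborel \<Otimes>\<^sub>M lborel)" by measurable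
    have "(\<lambda>s. \<integral>t. norm (case (s, t) of (s, t) \<Rightarrow> A s * B t) \<partial>lborel) = (\<lambda>s. \<bar>A s\<bar> * (\<integral>t. \<bar>B t\<bar> \<partial>lborel))"
      by (simp add: abs_mult)
    moreover have "integrable lborel (\<lambda>s. \<bar>A s\<bar> * (\<integral>t. \<bar>B t\<bar> \<partial>lborel))"
      using ia unfolding A_def by (intro integrable_mult_left integrable_abs) 
    ultimately show "integrable lborel (\<lambda>s. \<integral>t. norm (case (s, t) of (s, t) \<Rightarrow> A s * B t) \<partial>lborel)" by simp
    show "AE s in lborel. integrable lborel (\<lambda>t. case (s, t) of (s, t) \<Rightarrow> A s * B t)"
      using ib unfolding B_def by (intro AE_I2) simp
  qed
  have D: "{(s,t). t \<le> s} \<in> sets (lborel \<Otimes>\<^sub>M (lborel::real measure))"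
  proof -
    have "closed {p::real\<times>real. snd p \<le> fst p}"
      by (intro closed_Collect_le continuous_intros)
    then have "{p::real\<times>real. snd p \<le> fst p} \<in> sets borel" by (rule borel_closed)
    moreover have "sets (lborel \<Otimes>\<^sub>M lborel) = sets (borel :: (real\<times>real) measure)"
      by (simp only: lborel_prod sets_lborel)
    moreover have "{(s,t). t \<le> s} = {p::real\<times>real. snd p \<le> fst p}" by auto
    ultimately show ?thesis by simp
  qed
  have "integrable (lborel \<Otimes>\<^sub>M lborel) (\<lambda>x. indicator {(s,t). t \<le> s} x *\<^sub>R (case x of (s,t) \<Rightarrow> A s * B t))"
    by (rule integrable_mult_indicator[OF D iP])
  then have "integrable (lborel \<Otimes>\<^sub>M lborel) (case_prod f)"
    unfolding f_def A_def B_def by (simp add: case_prod_unfold)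
  then show ?thesis by (rule lborel_pair.Fubini_integral)
qed

lemma cont_Icc:
  fixes b :: "real \<Rightarrow> real"
  assumes "set_integrable lborel {0..l} b"
  shows "continuous_on {0..l} (\<lambda>s. LBINT t:{0..s}. b t)"
proof -
  have int: "b integrable_on {0..l}"
    using set_borel_integral_eq_integral(1)[OF assms(1)] .
  have "continuous_on {0..l} (\<lambda>s. integral {0..s} b)"
    by (rule indefinite_integral_continuous_1[OF int])
  moreover have "integral {0..s} b = (LBINT t:{0..s}. b t)" if "s \<in> {0..l}" for s
  proof -
    have "set_integrable lborel {0..s} b"
      by (rule set_integrable_subset[OF assms(1)]) (use that in auto)
    then show ?thesis by (simp add: set_borel_integral_eq_integral(2))
  qed
  ultimately show ?thesis by (rule continuous_on_eq)
qed

lemma Ico_Icc_int: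
  fixes a :: "real \<Rightarrow> real"
  assumes "0 \<le> t"
  shows "(LBINT s:{0..<t}. a s) = (LBINT s:{0..t}. a s)"
  using interval_integral_Icc[OF assms, of a] interval_integral_Ico[OF assms, of a] by simp

lemma fub:
  fixes a b :: "real \<Rightarrow> real"
  assumes l: "0 \<le> l" and sa: "set_integrable lborel {0..l} a" and sb: "set_integrable lborel {0..l} b"
  shows "(LBINT s:{0..l}. a s * (LBINT t:{0..s}. b t)) + (LBINT t:{0..l}. b t * (LBINT s:{0..t}. a s))
     = (LBINT s:{0..l}. a s) * (LBINT t:{0..l}. b t)"
proof -
  have ia: "integrable lborel (\<lambda>s. indicator {0..l} s * a s)" using sa by (simp add: set_integrable_def)
  have ib: "integrable lborel (\<lambda>s. indicator {0..l} s * b s)" using sb by (simp add: set_integrable_def)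
  define f where "f \<equiv> (\<lambda>s t. indicator {(s,t). t \<le> s} (s,t) * ((indicator {0..l} s * a s) * (indicator {0..l} t * b t)))"
  have FI: "(\<integral>t. (\<integral>s. f s t \<partial>lborel) \<partial>lborel) = (\<integral>s. (\<integral>t. f s t \<partial>lborel) \<partial>lborel)"
    unfolding f_def by (rule fub_core[OF ia ib])
  define V where "V = (\<lambda>s. LBINT t:{0..s}. b t)"
  define U where "U = (\<lambda>s. LBINT t:{0..s}. a t)"
  define Ia where "Ia = (LBINT s:{0..l}. a s)"
  define Ib where "Ib = (LBINT s:{0..l}. b s)"
  have R1: "(\<integral>t. f s t \<partial>lborel) = indicator {0..l} s * (a s * V s)" for s
  proof -
    have "f s t = indicator {0..l} s * a s * (indicator {0..s} t * b t)" for t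
      unfolding f_def by (auto simp: indicator_def)
    then show ?thesis unfolding V_def set_lebesgue_integral_def by simp
  qed
  have R2: "(\<integral>s. f s t \<partial>lborel) = indicator {0..l} t * (b t * Ia - b t * U t)" for t
  proof (cases "t \<in> {0..l}")
    case True
    have "f s t = b t * (indicator {0..l} s * a s - indicator {0..<t} s * a s)" for s
      unfolding f_def using True by (auto simp: indicator_def)
    moreover have "integrable lborel (\<lambda>s. indicator {0..<t} s * a s)"
    proof -
      have "{0..<t} \<subseteq> {0..l}" using True by auto
      then show ?thesis using set_integrable_subset[OF sa, of "{0..<t}"] by (simp add: set_integrable_def)
    qed
    ultimately have "(\<integral>s. f s t \<partial>lborel) = b t * (Ia - (LBINT s:{0..<t}. a s))"
      using ia unfolding Ia_def set_lebesgue_integral_def by simp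
    also have "(LBINT s:{0..<t}. a s) = U t" unfolding U_def using True by (simp add: Ico_Icc_int)
    finally show ?thesis using True by (simp add: algebra_simps)
  next
    case False
    then have "f s t = 0" for s unfolding f_def by (auto simp: indicator_def)
    then show ?thesis using False by simp
  qed
  have cU: "continuous_on {0..l} U" unfolding U_def by (rule cont_Icc[OF sa])
  have cV: "continuous_on {0..l} V" unfolding V_def by (rule cont_Icc[OF sb])
  have sbU: "set_integrable lborel {0..l} (\<lambda>t. b t * U t)" by (rule set_integrable_mult_cont[OF sb cU])
  have "(\<integral>t. (\<integral>s. f s t \<partial>lborel) \<partial>lborel) = (\<integral>t. indicator {0..l} t * b t * Ia - indicator {0..l} t * (b t * U t) \<partial>lborel)"
    unfolding R2 by (simp add: algebra_simps)
  also have "\<dots> = Ib * Ia - (LBINT t:{0..l}. b t * U t)"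
    using ib sbU unfolding Ib_def set_lebesgue_integral_def set_integrable_def by simp
  finally have L: "(\<integral>t. (\<integral>s. f s t \<partial>lborel) \<partial>lborel) = Ib * Ia - (LBINT t:{0..l}. b t * U t)" .
  have "(\<integral>s. (\<integral>t. f s t \<partial>lborel) \<partial>lborel) = (LBINT s:{0..l}. a s * V s)"
    unfolding R1 set_lebesgue_integral_def by simp
  with L FI show ?thesis unfolding U_def V_def Ia_def Ib_def by simp
qed

lemma sint_cong:
  fixes f g :: "real \<Rightarrow> real"
  assumes "\<And>x. x \<in> A \<Longrightarrow> f x = g x"
  shows "(LBINT x:A. f x) = (LBINT x:A. g x)"
  unfolding set_lebesgue_integral_def
  by (rule Bochner_Integration.integral_cong) (auto simp: assms indicator_def)

lemma sintegrable_cong: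
  fixes f g :: "real \<Rightarrow> real"
  assumes "\<And>x. x \<in> A \<Longrightarrow> f x = g x" "set_integrable lborel A f"
  shows "set_integrable lborel A g"
proof -
  have "(\<lambda>x. indicator A x *\<^sub>R f x) = (\<lambda>x. indicator A x *\<^sub>R g x)"
    by (auto simp: assms indicator_def fun_eq_iff)
  then show ?thesis using assms(2) unfolding set_integrable_def by simp
qed

lemma LB0:
  fixes f :: "real \<Rightarrow> real"
  assumes "0 \<le> t"
  shows "(LBINT s=0..t. f s) = (LBINT s:{0..t}. f s)"
  using interval_integral_Icc[OF assms, of f] by (metis zero_ereal_def)

lemma ibp:
  fixes u v u' v' :: "real \<Rightarrow> real"
  assumes l: "0 \<le> l" and su: "set_integrable lborel {0..l} u'" and sv: "set_integrable lborel {0..l} v'"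
    and hu: "\<forall>t\<in>{0..l}. u t = u 0 + (LBINT s=0..t. u' s)"
    and hv: "\<forall>t\<in>{0..l}. v t = v 0 + (LBINT s=0..t. v' s)"
  shows "set_integrable lborel {0..l} (\<lambda>t. u' t * v t + u t * v' t)"
    and "(LBINT t:{0..l}. u' t * v t + u t * v' t) = u l * v l - u 0 * v 0"
proof -
  define U where "U = (\<lambda>s. LBINT t:{0..s}. u' t)"
  define V where "V = (\<lambda>s. LBINT t:{0..s}. v' t)"
  have hu': "u t = u 0 + U t" if "t \<in> {0..l}" for t
  proof -
    have e: "u t = u 0 + (LBINT s=0..t. u' s)" using hu that by blast
    have t0: "0 \<le> t" using that by simp
    show ?thesis unfolding U_def by (simp only: e LB0[OF t0])
  qed
  have hv': "v t = v 0 + V t" if "t \<in> {0..l}" for t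
  proof -
    have e: "v t = v 0 + (LBINT s=0..t. v' s)" using hv that by blast
    have t0: "0 \<le> t" using that by simp
    show ?thesis unfolding V_def by (simp only: e LB0[OF t0])
  qed
  have cu: "continuous_on {0..l} u" by (rule indef_cont[OF su hu])
  have cv: "continuous_on {0..l} v" by (rule indef_cont[OF sv hv])
  have cU: "continuous_on {0..l} U" unfolding U_def by (rule cont_Icc[OF su])
  have cV: "continuous_on {0..l} V" unfolding V_def by (rule cont_Icc[OF sv])
  have i1: "set_integrable lborel {0..l} (\<lambda>t. u' t * v t)" by (rule set_integrable_mult_cont[OF su cv])
  have i2': "set_integrable lborel {0..l} (\<lambda>t. v' t * u t)" by (rule set_integrable_mult_cont[OF sv cu])
  have i2: "set_integrable lborel {0..l} (\<lambda>t. u t * v' t)" using i2' by (simp only: mult.commute)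
  show "set_integrable lborel {0..l} (\<lambda>t. u' t * v t + u t * v' t)" by (rule set_integral_add(1)[OF i1 i2])
  have j1: "set_integrable lborel {0..l} (\<lambda>t. u' t * V t)" by (rule set_integrable_mult_cont[OF su cV])
  have j2: "set_integrable lborel {0..l} (\<lambda>t. v' t * U t)" by (rule set_integrable_mult_cont[OF sv cU])
  have e1: "(LBINT t:{0..l}. u' t * v t) = v 0 * (LBINT t:{0..l}. u' t) + (LBINT t:{0..l}. u' t * V t)"
  proof -
    have "(LBINT t:{0..l}. u' t * v t) = (LBINT t:{0..l}. v 0 * u' t + u' t * V t)"
    proof (rule sint_cong)
      fix t assume t: "t \<in> {0..l}"
      show "u' t * v t = v 0 * u' t + u' t * V t" using hv'[OF t] by (simp add: algebra_simps)
    qed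
    also have "\<dots> = v 0 * (LBINT t:{0..l}. u' t) + (LBINT t:{0..l}. u' t * V t)"
      by (simp only: set_integral_add(2)[OF set_integrable_mult_right[OF su] j1] set_integral_mult_right)
    finally show ?thesis .
  qed
  have e2: "(LBINT t:{0..l}. u t * v' t) = u 0 * (LBINT t:{0..l}. v' t) + (LBINT t:{0..l}. v' t * U t)"
  proof -
    have "(LBINT t:{0..l}. u t * v' t) = (LBINT t:{0..l}. u 0 * v' t + v' t * U t)"
    proof (rule sint_cong)
      fix t assume t: "t \<in> {0..l}"
      show "u t * v' t = u 0 * v' t + v' t * U t" using hu'[OF t] by (simp add: algebra_simps)
    qed
    also have "\<dots> = u 0 * (LBINT t:{0..l}. v' t) + (LBINT t:{0..l}. v' t * U t)"
      by (simp only: set_integral_add(2)[OF set_integrable_mult_right[OF sv] j2] set_integral_mult_right)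
    finally show ?thesis .
  qed
  have F: "(LBINT s:{0..l}. u' s * V s) + (LBINT t:{0..l}. v' t * U t) = U l * V l"
    using fub[OF l su sv] unfolding U_def V_def by simp
  have "(LBINT t:{0..l}. u' t * v t + u t * v' t) = (LBINT t:{0..l}. u' t * v t) + (LBINT t:{0..l}. u t * v' t)"
    by (rule set_integral_add(2)[OF i1 i2])
  also have "\<dots> = v 0 * U l + u 0 * V l + U l * V l"
    unfolding e1 e2 U_def V_def using F unfolding U_def V_def by simp
  also have "\<dots> = u l * v l - u 0 * v 0"
    using hu'[of l] hv'[of l] l by (simp add: algebra_simps)
  finally show "(LBINT t:{0..l}. u' t * v t + u t * v' t) = u l * v l - u 0 * v 0" .
qed

lemma poincare:
  fixes g g' :: "real \<Rightarrow> real" and c k l :: real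
  assumes l: "0 < l" and k: "0 < k" and kl: "k * l < pi" and ck: "c \<le> k\<^sup>2"
    and H: "H1_deriv l g g'"
  shows "(LBINT t=0..l. (g' t)\<^sup>2 - (g t)\<^sup>2)
     \<ge> (c - 1) * (LBINT t=0..l. (g t)\<^sup>2) - k * tan (k * l / 2) * ((g 0)\<^sup>2 + (g l)\<^sup>2)"
proof -
  have l0: "0 \<le> l" using l by simp
  have sg: "set_integrable lborel {0..l} g'" using H unfolding H1_deriv_def by blast
  have sg2: "set_integrable lborel {0..l} (\<lambda>t. (g' t)\<^sup>2)" using H unfolding H1_deriv_def by blast
  have hg: "\<forall>t\<in>{0..l}. g t = g 0 + (LBINT s=0..t. g' s)" using H unfolding H1_deriv_def by blast
  have cg: "continuous_on {0..l} g" by (rule indef_cont[OF sg hg])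
  define G2 where "G2 = (\<lambda>t. g' t * g t + g t * g' t)"
  have sq: "g t * g t = g 0 * g 0 + (LBINT s=0..t. G2 s)" if t: "t \<in> {0..l}" for t
  proof -
    have t0: "0 \<le> t" using t by simp
    have sgt: "set_integrable lborel {0..t} g'"
      by (rule set_integrable_subset[OF sg]) (use t in auto)
    have hgt: "\<forall>s\<in>{0..t}. g s = g 0 + (LBINT s=0..s. g' s)"
    proof
      fix s assume "s \<in> {0..t}"
      then have "s \<in> {0..l}" using t by auto
      then show "g s = g 0 + (LBINT s=0..s. g' s)" using hg by blast
    qed
    have "(LBINT s:{0..t}. G2 s) = g t * g t - g 0 * g 0"
      unfolding G2_def by (rule ibp(2)[OF t0 sgt sgt hgt hgt])
    then show ?thesis by (simp only: LB0[OF t0])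
  qed
  have sG2: "set_integrable lborel {0..l} G2"
    unfolding G2_def by (rule ibp(1)[OF l0 sg sg hg hg])
  define w where "w = (\<lambda>t. k * tan (k * (t - l / 2)))"
  define w' where "w' = (\<lambda>t. k * (k * inverse ((cos (k * (t - l / 2)))\<^sup>2)))"
  have cpos: "0 < cos (k * (t - l / 2))" if t: "t \<in> {0..l}" for t
  proof (rule cos_gt_zero_pi)
    have "k * (t - l / 2) \<le> k * (l / 2)" using t k by (intro mult_left_mono) auto
    then show "k * (t - l / 2) < pi / 2" using kl by simp
    have "k * (- (l / 2)) \<le> k * (t - l / 2)" using t k by (intro mult_left_mono) auto
    then show "- (pi / 2) < k * (t - l / 2)" using kl by simp
  qed
  have dw: "(w has_vector_derivative w' t) (at t within {min 0 l..max 0 l})" if t: "min 0 l \<le> t" "t \<le> max 0 l" for t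
  proof -
    have tt: "t \<in> {0..l}" using t l by auto
    have "(w has_real_derivative w' t) (at t)"
      unfolding w_def w'_def using cpos[OF tt]
      by (auto intro!: derivative_eq_intros simp: field_simps)
    then show ?thesis using has_field_derivative_at_within has_real_derivative_iff_has_vector_derivative by blast
  qed
  have cw': "continuous_on {0..l} w'"
  proof -
    have cne: "cos (k * (t - l / 2)) \<noteq> 0" if "t \<in> {0..l}" for t using cpos[OF that] by simp
    show ?thesis unfolding w'_def by (auto intro!: continuous_intros simp: cne)
  qed
  have sw': "set_integrable lborel {0..l} w'" by (rule borel_integrable_atLeastAtMost'[OF cw'])
  have hw: "\<forall>t\<in>{0..l}. w t = w 0 + (LBINT s=0..t. w' s)"
  proof
    fix t assume t: "t \<in> {0..l}"
    have "(LBINT s=ereal 0..ereal t. w' s) = w t - w 0"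
    proof (rule interval_integral_FTC_finite)
      show "continuous_on {min 0 t..max 0 t} w'" using t by (auto intro: continuous_on_subset[OF cw'])
      show "(w has_vector_derivative w' x) (at x within {min 0 t..max 0 t})" if "min 0 t \<le> x" "x \<le> max 0 t" for x
        using dw[of x] that t l by (auto intro: has_vector_derivative_within_subset)
    qed
    then have "(LBINT s=0..t. w' s) = w t - w 0" by (metis zero_ereal_def)
    then show "w t = w 0 + (LBINT s=0..t. w' s)" by linarith
  qed
  have hgg: "\<forall>t\<in>{0..l}. g t * g t = g 0 * g 0 + (LBINT s=0..t. G2 s)" using sq by blast
  have I1: "set_integrable lborel {0..l} (\<lambda>t. G2 t * w t + g t * g t * w' t)"
    and I2: "(LBINT t:{0..l}. G2 t * w t + g t * g t * w' t) = g l * g l * w l - g 0 * g 0 * w 0"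
    by (rule ibp(1)[OF l0 sG2 sw' hgg hw], rule ibp(2)[OF l0 sG2 sw' hgg hw])
  have cg2: "continuous_on {0..l} (\<lambda>t. (g t)\<^sup>2)" using cg by (auto intro: continuous_intros)
  have sg2': "set_integrable lborel {0..l} (\<lambda>t. (g t)\<^sup>2)" by (rule borel_integrable_atLeastAtMost'[OF cg2])
  have sX: "set_integrable lborel {0..l} (\<lambda>t. (g' t)\<^sup>2 - c * (g t)\<^sup>2)"
    using sg2 sg2' by auto
  have pw: "0 \<le> ((g' t)\<^sup>2 - c * (g t)\<^sup>2) + (G2 t * w t + g t * g t * w' t)" if t: "t \<in> {0..l}" for t
  proof -
    have ww: "w' t = k\<^sup>2 + (w t)\<^sup>2"
    proof -
      define x where "x = k * (t - l / 2)"
      have x: "cos x \<noteq> 0" using cpos[OF t] unfolding x_def by simp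
      have "1 + (tan x)\<^sup>2 = ((cos x)\<^sup>2 + (sin x)\<^sup>2) / (cos x)\<^sup>2"
        using x by (simp add: tan_def power_divide field_simps)
      also have "\<dots> = inverse ((cos x)\<^sup>2)" by (simp add: inverse_eq_divide)
      finally have "inverse ((cos x)\<^sup>2) = 1 + (tan x)\<^sup>2" by simp
      then show ?thesis unfolding w_def w'_def x_def[symmetric]
        by (simp add: algebra_simps power2_eq_square)
    qed
    have "((g' t)\<^sup>2 - c * (g t)\<^sup>2) + (G2 t * w t + g t * g t * w' t)
       = (g' t + w t * g t)\<^sup>2 + (k\<^sup>2 - c) * (g t)\<^sup>2"
      unfolding G2_def ww by (simp add: algebra_simps power2_eq_square)
    also have "\<dots> \<ge> 0" using ck by (intro add_nonneg_nonneg mult_nonneg_nonneg) auto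
    finally show ?thesis by simp
  qed
  have "0 \<le> (LBINT t:{0..l}. ((g' t)\<^sup>2 - c * (g t)\<^sup>2) + (G2 t * w t + g t * g t * w' t))"
  proof -
    have z: "set_integrable lborel {0..l} (\<lambda>t. 0::real)" by (simp add: set_integrable_def)
    show ?thesis using set_integral_mono[OF z set_integral_add(1)[OF sX I1] pw] by simp
  qed
  also have "\<dots> = (LBINT t:{0..l}. (g' t)\<^sup>2 - c * (g t)\<^sup>2) + (g l * g l * w l - g 0 * g 0 * w 0)"
    by (simp only: set_integral_add(2)[OF sX I1] I2)
  finally have X: "(LBINT t:{0..l}. (g' t)\<^sup>2 - c * (g t)\<^sup>2) \<ge> - (g l * g l * w l - g 0 * g 0 * w 0)" by simp
  have wl: "w l = k * tan (k * l / 2)" and w0: "w 0 = - (k * tan (k * l / 2))"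
    unfolding w_def by (simp_all add: field_simps)
  have "(LBINT t:{0..l}. (g' t)\<^sup>2 - (g t)\<^sup>2) = (LBINT t:{0..l}. ((g' t)\<^sup>2 - c * (g t)\<^sup>2) + (c - 1) * (g t)\<^sup>2)"
    by (rule sint_cong) (simp add: algebra_simps)
  also have "\<dots> = (LBINT t:{0..l}. (g' t)\<^sup>2 - c * (g t)\<^sup>2) + (c - 1) * (LBINT t:{0..l}. (g t)\<^sup>2)"
    by (simp only: set_integral_add(2)[OF sX set_integrable_mult_right[OF sg2']] set_integral_mult_right)
  finally have E: "(LBINT t:{0..l}. (g' t)\<^sup>2 - (g t)\<^sup>2) = (LBINT t:{0..l}. (g' t)\<^sup>2 - c * (g t)\<^sup>2) + (c - 1) * (LBINT t:{0..l}. (g t)\<^sup>2)" .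
  have "(LBINT t:{0..l}. (g' t)\<^sup>2 - (g t)\<^sup>2) \<ge> (c - 1) * (LBINT t:{0..l}. (g t)\<^sup>2) - k * tan (k * l / 2) * ((g 0)\<^sup>2 + (g l)\<^sup>2)"
    using X unfolding E wl w0 by (simp add: algebra_simps power2_eq_square)
  then show ?thesis by (simp only: LB0[OF l0])
qed

lemma sin_lower:
  fixes z :: real
  assumes "0 \<le> z"
  shows "z - z ^ 3 / 6 \<le> sin z"
proof -
  have "\<bar>sin z - (\<Sum>m<3. sin_coeff m * z ^ m)\<bar> \<le> inverse (fact 3) * \<bar>z\<bar> ^ 3"
    by (rule Maclaurin_sin_bound)
  moreover have "(\<Sum>m<3. sin_coeff m * z ^ m) = z"
    by (simp add: lessThan_nat_numeral sin_coeff_def)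
  moreover have "inverse (fact 3) * \<bar>z\<bar> ^ 3 = z ^ 3 / 6"
  proof -
    have "fact 3 = (6::real)" by (simp add: fact_numeral)
    moreover have "\<bar>z\<bar> = z" using assms by (rule abs_of_nonneg)
    ultimately show ?thesis by (simp only: divide_inverse mult.commute)
  qed
  ultimately show ?thesis by linarith
qed

lemma numeric:
  fixes \<rho> l k :: real
  assumes r0: "0 < \<rho>" and r1: "\<rho> \<le> 1" and l0: "0 < l" and lpi: "l \<le> pi"
    and cl: "- 1 + 2 * \<rho>\<^sup>2 \<le> cos l" and kdef: "k = 1 + \<rho>\<^sup>2 / 4"
  shows "k * l < pi" and "k * tan (k * l / 2) \<le> 4 * l / \<rho>\<^sup>2"
proof -
  have pi4: "pi \<le> 4" using pi_less_4 by simp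
  have pi3: "3 \<le> pi" using pi_gt3 by simp
  have s1: "sin \<rho> \<le> \<rho>" using sin_x_le_x r0 by simp
  have s0: "0 \<le> sin \<rho>" using r0 r1 pi3 by (intro sin_ge_zero) auto
  have "(sin \<rho>)\<^sup>2 \<le> \<rho>\<^sup>2" using s0 s1 by (intro power_mono) auto
  then have "cos (pi - 2 * \<rho>) \<le> cos l"
    using cl by (simp add: cos_double_sin)
  then have lb: "l \<le> pi - 2 * \<rho>"
    using r1 r0 l0 lpi pi3 by (subst (asm) cos_mono_le_eq) auto
  have k1: "1 \<le> k" "k \<le> 5 / 4" using kdef r1 r0 by (auto simp: power_le_one)
  have "k * l \<le> k * (pi - 2 * \<rho>)" using lb k1 by (intro mult_left_mono) auto
  also have "\<dots> \<le> pi - \<rho>"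
  proof -
    have "\<rho>\<^sup>2 * pi \<le> \<rho> * 4"
    proof -
      have "\<rho>\<^sup>2 * pi \<le> \<rho> * pi" using r0 r1 by (intro mult_right_mono) (auto simp: power2_eq_square)
      also have "\<dots> \<le> \<rho> * 4" using r0 pi4 by (intro mult_left_mono) auto
      finally show ?thesis .
    qed
    moreover have "0 \<le> \<rho>^3" using r0 by simp
    ultimately show ?thesis unfolding kdef by (simp add: algebra_simps power2_eq_square power3_eq_cube)
  qed
  finally have klb: "k * l \<le> pi - \<rho>" .
  then show "k * l < pi" using r0 by simp
  define x where "x = k * l / 2"
  have x0: "0 < x" unfolding x_def using k1 l0 by simp
  have xb: "x \<le> pi / 2 - \<rho> / 2" unfolding x_def using klb by simp
  have cx: "sin (\<rho> / 2) \<le> cos x"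
  proof -
    have "cos x = sin (pi / 2 - x)" by (simp add: cos_sin_eq)
    moreover have "sin (\<rho> / 2) \<le> sin (pi / 2 - x)"
      using xb x0 r0 r1 pi3 by (subst sin_mono_le_eq) auto
    ultimately show ?thesis by simp
  qed
  have "\<rho> / 2 - (\<rho> / 2) ^ 3 / 6 \<le> sin (\<rho> / 2)" using r0 by (intro sin_lower) simp
  moreover have "(\<rho> / 2) ^ 3 / 6 \<le> (\<rho> / 2) / 24"
  proof -
    have "(\<rho> / 2) ^ 3 = (\<rho> / 2) * (\<rho> / 2)\<^sup>2" by (simp add: power3_eq_cube power2_eq_square)
    also have "\<dots> \<le> (\<rho> / 2) * (1 / 4)"
    proof (intro mult_left_mono)
      have "\<rho> * \<rho> \<le> 1 * 1" using r0 r1 by (intro mult_mono) auto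
      then show "(\<rho> / 2)\<^sup>2 \<le> 1 / 4" by (simp add: power2_eq_square)
    qed (use r0 in simp)
    finally show ?thesis by simp
  qed
  ultimately have cxl: "23 * \<rho> / 48 \<le> cos x" using cx by simp
  have cpos: "0 < cos x" using cxl r0 by simp
  have "tan x = sin x / cos x" by (simp add: tan_def)
  also have "\<dots> \<le> x / cos x" using sin_x_le_x[of x] x0 cpos by (intro divide_right_mono) auto
  also have "\<dots> \<le> x / (23 * \<rho> / 48)" using cxl x0 r0 by (intro divide_left_mono) auto
  finally have tx: "tan x \<le> x * 48 / (23 * \<rho>)" by simp
  have "k * tan x \<le> k * (x * 48 / (23 * \<rho>))" using tx k1 by (intro mult_left_mono) auto
  also have "\<dots> = k * k * l * 24 / (23 * \<rho>)" unfolding x_def by (simp add: field_simps)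
  also have "\<dots> \<le> 4 * l / \<rho>\<^sup>2"
  proof -
    have kk: "k * k \<le> 25 / 16" using mult_mono[OF k1(2) k1(2)] k1 by simp
    have A: "k * k * (l * \<rho>) \<le> 25 / 16 * (l * \<rho>)"
      using kk l0 r0 by (intro mult_right_mono) auto
    have B: "l * \<rho> \<le> l" using r1 l0 by simp
    have "k * k * l * 24 * \<rho> = 24 * (k * k * (l * \<rho>))" by (simp add: algebra_simps)
    also have "\<dots> \<le> 24 * (25 / 16 * (l * \<rho>))" using A by linarith
    also have "\<dots> \<le> 4 * l * 23" using B l0 by simp
    finally have main: "k * k * l * 24 * \<rho> \<le> 4 * l * 23" .
    have "k * k * l * 24 / (23 * \<rho>) = (k * k * l * 24 * \<rho>) / (23 * \<rho>\<^sup>2)"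
      using r0 by (simp add: power2_eq_square field_simps)
    also have "\<dots> \<le> (4 * l * 23) / (23 * \<rho>\<^sup>2)"
      using main r0 by (intro divide_right_mono) auto
    also have "\<dots> = 4 * l / \<rho>\<^sup>2" by simp
    finally show ?thesis .
  qed
  finally show "k * tan (k * l / 2) \<le> 4 * l / \<rho>\<^sup>2" unfolding x_def .
qed

lemma hyperplane_unit_eq:
  fixes u v p :: "'a::euclidean_space"
  assumes nu: "norm u = 1" and nv: "norm v = 1"
    and eq: "{x. u \<bullet> x = h} = {x. v \<bullet> x = k}" and p: "u \<bullet> p = h"
  shows "v = u \<or> v = - u"
proof -
  have pv: "v \<bullet> p = k" using eq p by blast
  have uu: "u \<bullet> u = 1" using nu by (simp add: dot_square_norm)
  have vv: "v \<bullet> v = 1" using nv by (simp add: dot_square_norm)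
  define z where "z = v - (u \<bullet> v) *\<^sub>R u"
  have "u \<bullet> (p + z) = h" unfolding z_def using p uu by (simp add: inner_add_right inner_diff_right)
  then have "v \<bullet> (p + z) = k" using eq by blast
  then have "v \<bullet> z = 0" using pv by (simp add: inner_add_right)
  then have c2: "(u \<bullet> v) * (u \<bullet> v) = 1" unfolding z_def using vv by (simp add: inner_diff_right inner_commute)
  have "z \<bullet> z = 0" unfolding z_def using uu vv c2
    by (simp add: inner_diff_right inner_diff_left inner_commute algebra_simps)
  then have "z = 0" by simp
  then have vz: "v = (u \<bullet> v) *\<^sub>R u" unfolding z_def by simp
  from c2 have "u \<bullet> v = 1 \<or> u \<bullet> v = -1"
    by (metis mult_cancel_left1 square_eq_1_iff)
  then show ?thesis using vz by auto
qed

lemma outer_normal_props: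
  fixes M F :: "'a::euclidean_space set"
  assumes pM: "polytope M" and r: "0 < r" and ball: "cball 0 r \<subseteq> M" and fac: "F facet_of M"
  shows "norm (outer_normal M F) = 1 \<and>
         (\<exists>h. F \<subseteq> {x. outer_normal M F \<bullet> x = h} \<and> M \<subseteq> {x. outer_normal M F \<bullet> x \<le> h})"
proof -
  have "polyhedron M" using pM by (rule polytope_imp_polyhedron)
  then obtain a b where a0: "a \<noteq> 0" and Ma: "M \<subseteq> {x. a \<bullet> x \<le> b}" and Fa: "F = M \<inter> {x. a \<bullet> x = b}"
    using fac by (rule facet_of_polyhedron)
  define u where "u = a /\<^sub>R norm a"
  define h where "h = b / norm a"
  have nu: "norm u = 1" unfolding u_def using a0 by simp
  have ueq: "u \<bullet> x = a \<bullet> x / norm a" for x unfolding u_def by (simp add: divide_inverse mult.commute)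
  have Fu: "F \<subseteq> {x. u \<bullet> x = h}" using Fa a0 unfolding h_def by (auto simp: ueq)
  have Mu: "M \<subseteq> {x. u \<bullet> x \<le> h}" using Ma a0 unfolding h_def by (auto simp: ueq divide_right_mono)
  have affM: "aff_dim M = int DIM('a)"
  proof -
    have "aff_dim (cball (0::'a) r) \<le> aff_dim M" by (rule aff_dim_subset[OF ball])
    then show ?thesis using aff_dim_cball[OF r, of "0::'a"] aff_dim_le_DIM[of M] by simp
  qed
  have Fne: "F \<noteq> {}" and affF: "aff_dim F = int DIM('a) - 1"
    using fac affM unfolding facet_of_def by auto
  have hullF: "affine hull F = {x. w \<bullet> x = k}"
    if w: "w \<noteq> 0" and Fw: "F \<subseteq> {x. w \<bullet> x = k}" for w :: 'a and k
  proof (rule affine_dim_equal)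
    show "affine (affine hull F)" by simp
    show "affine {x. w \<bullet> x = k}" by (rule affine_hyperplane)
    show "affine hull F \<noteq> {}" using Fne by simp
    show "affine hull F \<subseteq> {x. w \<bullet> x = k}" by (rule hull_minimal[OF Fw]) (rule affine_hyperplane)
    show "aff_dim (affine hull F) = aff_dim {x. w \<bullet> x = k}" using affF w by simp
  qed
  have uniq: "v = u" if nv: "norm v = 1" and Fv: "F \<subseteq> {x. v \<bullet> x = k}" and Mv: "M \<subseteq> {x. v \<bullet> x \<le> k}" for v k
  proof -
    have u0: "u \<noteq> 0" and v0: "v \<noteq> 0" using nu nv by auto
    have eq: "{x. u \<bullet> x = h} = {x. v \<bullet> x = k}" using hullF[OF u0 Fu] hullF[OF v0 Fv] by simp
    obtain p where "p \<in> F" using Fne by auto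
    then have p: "u \<bullet> p = h" using Fu by auto
    have "v = u \<or> v = - u" by (rule hyperplane_unit_eq[OF nu nv eq p])
    moreover have "v \<noteq> - u"
    proof
      assume vu: "v = - u"
      have k: "k = - h" using eq p vu by auto
      have ru: "r *\<^sub>R u \<in> M" and rmu: "- (r *\<^sub>R u) \<in> M" using ball nu r by auto
      have uu: "u \<bullet> u = 1" using nu by (simp add: dot_square_norm)
      have "r \<le> h" using Mu ru uu by auto
      moreover have "v \<bullet> (- (r *\<^sub>R u)) \<le> k" using Mv rmu by auto
      then have "r \<le> - h" using vu k uu by simp
      ultimately show False using r by simp
    qed
    ultimately show ?thesis by blast
  qed
  have P: "norm u = 1 \<and> (\<exists>h. F \<subseteq> {x. u \<bullet> x = h} \<and> M \<subseteq> {x. u \<bullet> x \<le> h})"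
    using nu Fu Mu by blast
  have "outer_normal M F = u"
    unfolding outer_normal_def
  proof (rule the_equality)
    show "norm u = 1 \<and> (\<exists>h. F \<subseteq> {x. u \<bullet> x = h} \<and> M \<subseteq> {x. u \<bullet> x \<le> h})" by (rule P)
    show "v = u" if "norm v = 1 \<and> (\<exists>h. F \<subseteq> {x. v \<bullet> x = h} \<and> M \<subseteq> {x. v \<bullet> x \<le> h})" for v
      using that uniq by blast
  qed
  then show ?thesis using P by simp
qed

lemma arc_param_0: "arc_param a b 0 = a"
  unfolding arc_param_def Let_def by simp

lemma arc_param_end:
  fixes a b :: "'a::euclidean_space"
  assumes na: "norm a = 1" and nb: "norm b = 1" and c1: "-1 < a \<bullet> b" and c2: "a \<bullet> b < 1"
  shows "arc_param a b (arc_len a b) = b"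
proof -
  define c where "c = a \<bullet> b"
  define w where "w = b - c *\<^sub>R a"
  have aa: "a \<bullet> a = 1" using na by (simp add: dot_square_norm)
  have bb: "b \<bullet> b = 1" using nb by (simp add: dot_square_norm)
  have "w \<bullet> w = 1 - c\<^sup>2" unfolding w_def c_def using aa bb
    by (simp add: inner_diff_right inner_diff_left inner_commute power2_eq_square algebra_simps)
  then have nw: "norm w = sqrt (1 - c\<^sup>2)" by (simp add: norm_eq_sqrt_inner)
  have c1': "-1 \<le> c" "c \<le> 1" using c1 c2 unfolding c_def by auto
  have "c\<^sup>2 < 1" using c1 c2 unfolding c_def by (simp add: abs_square_less_1)
  then have nw0: "norm w \<noteq> 0" using nw by simp
  have "arc_param a b (arc_len a b) = cos (arccos c) *\<^sub>R a + sin (arccos c) *\<^sub>R (w /\<^sub>R norm w)"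
    unfolding arc_param_def arc_len_def Let_def w_def c_def by simp
  also have "\<dots> = c *\<^sub>R a + w"
    using c1' nw nw0 by (simp add: sin_arccos)
  also have "\<dots> = b" unfolding w_def by simp
  finally show ?thesis .
qed

lemma LB_same0: "(LBINT t=0..ereal 0. f t) = 0"
  by (metis interval_integral_endpoints_same zero_ereal_def)

theorem corollary7p6:
  fixes M F F' :: "(real ^ 'n) set" and r R :: real
    and f :: "real ^ 'n \<Rightarrow> real" and f' :: "real \<Rightarrow> real"
  assumes "CARD('n) \<ge> 3"
    and "polytope M"
    and "r > 0" and "R > 0"
    and "cball 0 r \<subseteq> M" and "M \<subseteq> cball 0 R"
    and "neighbor_facets M F F'"
    and "H1_deriv (arc_len (outer_normal M F) (outer_normal M F'))
           (f \<circ> arc_param (outer_normal M F) (outer_normal M F')) f'"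
  shows "(LBINT t=0..arc_len (outer_normal M F) (outer_normal M F').
            (f' t)\<^sup>2 - (f (arc_param (outer_normal M F) (outer_normal M F') t))\<^sup>2)
         \<ge> r\<^sup>2 / (2 * R\<^sup>2) *
            (LBINT t=0..arc_len (outer_normal M F) (outer_normal M F').
               (f (arc_param (outer_normal M F) (outer_normal M F') t))\<^sup>2)
           - 4 * R\<^sup>2 / r\<^sup>2 * arc_len (outer_normal M F) (outer_normal M F')
             * ((f (outer_normal M F))\<^sup>2 + (f (outer_normal M F'))\<^sup>2)"
proof -
  note card = assms(1) and pM = assms(2) and r = assms(3) and R = assms(4)
    and ball = assms(5) and MR = assms(6) and nb = assms(7) and H = assms(8)
  define a where "a = outer_normal M F"
  define b where "b = outer_normal M F'"
  define l where "l = arc_len a b"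
  have facF: "F facet_of M" and facF': "F' facet_of M"
    and affI: "aff_dim (F \<inter> F') = int DIM(real ^ 'n) - 2"
    using nb unfolding neighbor_facets_def by auto
  obtain ha where na: "norm a = 1" and Fa: "F \<subseteq> {x. a \<bullet> x = ha}" and Ma: "M \<subseteq> {x. a \<bullet> x \<le> ha}"
    using outer_normal_props[OF pM r ball facF] unfolding a_def by blast
  obtain hb where nb': "norm b = 1" and Fb: "F' \<subseteq> {x. b \<bullet> x = hb}" and Mb: "M \<subseteq> {x. b \<bullet> x \<le> hb}"
    using outer_normal_props[OF pM r ball facF'] unfolding b_def by blast
  have "F \<inter> F' \<noteq> {}"
  proof
    assume "F \<inter> F' = {}"
    then have "aff_dim (F \<inter> F') = -1" by simp
    then show False using affI card by simp
  qed
  then obtain x where xF: "x \<in> F" and xF': "x \<in> F'" by auto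
  have xM: "x \<in> M" using xF facet_of_imp_subset[OF facF] by auto
  have nx: "norm x \<le> R" using xM MR by auto
  have ax: "a \<bullet> x = ha" using xF Fa by auto
  have bx: "b \<bullet> x = hb" using xF' Fb by auto
  have aa: "a \<bullet> a = 1" using na by (simp add: dot_square_norm)
  have bb: "b \<bullet> b = 1" using nb' by (simp add: dot_square_norm)
  have raM: "r *\<^sub>R a \<in> M" and rbM: "r *\<^sub>R b \<in> M" using ball na nb' r by auto
  have rha: "r \<le> ha" using Ma raM aa by auto
  have rhb: "r \<le> hb" using Mb rbM bb by auto
  have rR: "r \<le> R" using raM MR na r by auto
  define \<rho> where "\<rho> = r / R"
  have \<rho>0: "0 < \<rho>" and \<rho>1: "\<rho> \<le> 1" unfolding \<rho>_def using r R rR by auto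
  define c where "c = a \<bullet> b"
  have "2 * r \<le> (a + b) \<bullet> x" using ax bx rha rhb by (simp add: inner_add_left)
  also have "\<dots> \<le> norm (a + b) * norm x" by (rule norm_cauchy_schwarz)
  also have "\<dots> \<le> norm (a + b) * R" using nx by (intro mult_left_mono) auto
  finally have "2 * \<rho> \<le> norm (a + b)" unfolding \<rho>_def using R by (simp add: field_simps)
  then have "(2 * \<rho>)\<^sup>2 \<le> (norm (a + b))\<^sup>2" using \<rho>0 by (intro power_mono) auto
  also have "(norm (a + b))\<^sup>2 = 2 + 2 * c"
    unfolding c_def power2_norm_eq_inner using aa bb
    by (simp add: inner_add_left inner_add_right inner_commute)
  finally have cl: "- 1 + 2 * \<rho>\<^sup>2 \<le> c" by (simp add: power2_eq_square)
  have cabs: "\<bar>c\<bar> \<le> 1" unfolding c_def using Cauchy_Schwarz_ineq2[of a b] na nb' by simp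
  have cm: "- 1 \<le> c" "c \<le> 1" using cabs by auto
  have ldef: "l = arccos c" unfolding l_def arc_len_def c_def by simp
  have l0: "0 \<le> l" and lpi: "l \<le> pi" unfolding ldef using cm by (auto intro: arccos_lbound arccos_ubound)
  have cosl: "cos l = c" unfolding ldef using cm by simp
  define g where "g = f \<circ> arc_param a b"
  define I1 where "I1 = (LBINT t=0..l. (f' t)\<^sup>2 - (f (arc_param a b t))\<^sup>2)"
  define I2 where "I2 = (LBINT t=0..l. (f (arc_param a b t))\<^sup>2)"
  have goal: "I1 \<ge> r\<^sup>2 / (2 * R\<^sup>2) * I2 - 4 * R\<^sup>2 / r\<^sup>2 * l * ((f a)\<^sup>2 + (f b)\<^sup>2)"
  proof (cases "l = 0")
    case True
    have "I1 = 0" "I2 = 0" unfolding I1_def I2_def True by (rule LB_same0)+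
    then show ?thesis using True by simp
  next
    case False
    then have lpos: "0 < l" using l0 by simp
    have c1: "c \<noteq> 1" using False unfolding ldef by auto
    have cgt: "-1 < c" using cl \<rho>0 by (smt (verit) zero_less_power)
    have gl: "arc_param a b l = b"
      unfolding l_def by (rule arc_param_end[OF na nb']) (use cgt c1 cm c_def in auto)
    define k where "k = 1 + \<rho>\<^sup>2 / 4"
    have kpos: "0 < k" unfolding k_def by (simp add: add_pos_nonneg)
    have num: "k * l < pi" "k * tan (k * l / 2) \<le> 4 * l / \<rho>\<^sup>2"
      using numeric[OF \<rho>0 \<rho>1 lpos lpi _ k_def] cl cosl by auto
    have r4: "0 \<le> \<rho> * (\<rho> * (\<rho> * \<rho>))" using \<rho>0 by simp
    have ck: "1 + \<rho>\<^sup>2 / 2 \<le> k\<^sup>2" unfolding k_def using r4 by (simp add: power2_eq_square algebra_simps)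
    have Hg: "H1_deriv l g f'" using H unfolding g_def l_def a_def b_def .
    have P: "(LBINT t=0..l. (f' t)\<^sup>2 - (g t)\<^sup>2)
       \<ge> (1 + \<rho>\<^sup>2 / 2 - 1) * (LBINT t=0..l. (g t)\<^sup>2) - k * tan (k * l / 2) * ((g 0)\<^sup>2 + (g l)\<^sup>2)"
      by (rule poincare[OF lpos kpos num(1) ck Hg])
    have g0: "g 0 = f a" unfolding g_def by (simp add: arc_param_0)
    have gL: "g l = f b" unfolding g_def using gl by simp
    have P2: "I1 \<ge> \<rho>\<^sup>2 / 2 * I2 - k * tan (k * l / 2) * ((f a)\<^sup>2 + (f b)\<^sup>2)"
      using P unfolding I1_def I2_def g0 gL unfolding g_def comp_def by simp
    have S: "0 \<le> (f a)\<^sup>2 + (f b)\<^sup>2" by simp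
    have m: "k * tan (k * l / 2) * ((f a)\<^sup>2 + (f b)\<^sup>2) \<le> 4 * l / \<rho>\<^sup>2 * ((f a)\<^sup>2 + (f b)\<^sup>2)"
      by (rule mult_right_mono[OF num(2) S])
    have e1: "4 * l / \<rho>\<^sup>2 = 4 * R\<^sup>2 / r\<^sup>2 * l" unfolding \<rho>_def using r R by (simp add: field_simps power2_eq_square)
    have e2: "\<rho>\<^sup>2 / 2 = r\<^sup>2 / (2 * R\<^sup>2)" unfolding \<rho>_def using R by (simp add: field_simps power2_eq_square)
    have m': "k * tan (k * l / 2) * ((f a)\<^sup>2 + (f b)\<^sup>2) \<le> 4 * R\<^sup>2 / r\<^sup>2 * l * ((f a)\<^sup>2 + (f b)\<^sup>2)"
      using m unfolding e1 .
    have P3: "I1 \<ge> r\<^sup>2 / (2 * R\<^sup>2) * I2 - k * tan (k * l / 2) * ((f a)\<^sup>2 + (f b)\<^sup>2)"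
      using P2 unfolding e2 .
    show ?thesis using m' P3 by linarith
  qed
  then show ?thesis unfolding I1_def I2_def l_def a_def b_def .
qed

end
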